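(* Let $m\in\mathbb Z_{\ge0}$, let $\lambda/\mu$ be an r-shape and $\mathbf a,\mathbf b$ column flags for it with conjugates $\mathbf a',\mathbf b'$. Write $\tau(k)=-k+1$, $\eta(k)=k-m$, $u_j=\max(1,a_j)$, $v_i=\min(m,b_i)$, and set $\alpha_i=\beta_i=0$ for $i\le0$. Then $$\mathsf g^{\mathbf a,\mathbf b}_{\lambda/\mu}(\mathbf x_m;\boldsymbol\alpha,\boldsymbol\beta)=\det\left[e_{\lambda'_i-i-\mu'_j+j}\left(\mathbf x_{u_j,v_i},\overline{\boldsymbol\alpha}_{\tau(b_i),\tau(a_j)},\boldsymbol\beta_{\eta(a_j),\eta(b_i)}\,/\,\overline{\boldsymbol\alpha}_{\eta(a'_j),\eta(b'_i)},\boldsymbol\beta_{\tau(b'_i),\tau(a'_j)}\right)\right]_{1\le i,j\le n}$$ for $n\ge\lambda_1$. In particular, if $\lambda/\mu$ is a usual skew shape and $a_i=-i+2$, $b_i=\lambda'_i+m-1$ for $i\in[n]$, then $\mathsf S^{\mathbf a,\mathbf b}_{\lambda/\mu}(\mathbf y/\mathbf z)|_g=\mathsf g^{\mathbf a,\mathbf b}_{\lambda/\mu}(\mathbf x_m;\boldsymbol\alpha,\boldsymbol\beta)=g_{\lambda/\mu}(\mathbf x_m;\boldsymbol\alpha,\boldsymbol\beta)$.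
   Context: Young diagrams in English notation; $\lambda'$ conjugate partition. An r-shape is $(\lambda/\mu,r)$ with shifted contents $c(i,j)=j-i+r-1+\lambda'_1$; a usual skew shape has $c(i,j)=j-i$. Column flags: for $n\ge\lambda_1$, $\mathbf a,\mathbf b\in\mathbb Z^n$ with $a_i-a_{i+1}\le\mu'_i-\mu'_{i+1}+1$, $b_i-b_{i+1}\le\lambda'_i-\lambda'_{i+1}+1$ whenever $\mu'_i<\lambda'_{i+1}$; conjugate flags $a'_i=a_i+c(\gamma_i)$, $b'_i=b_i+c(\delta_i)$ ($\gamma_i,\delta_i$ top and bottom cells of column $i$). For a sequence of variables $\mathbf w$, $\mathbf w_{p,q}=(w_p,\ldots,w_q)$ (empty if $p>q$), $\mathbf w_k=\mathbf w_{1,k}$, $\overline{\mathbf w}=(-w_i)$; commas between variable sets denote their union. $e_n(\mathbf x/\mathbf w)=\sum_{i=0}^n(-1)^{n-i}e_i(\mathbf x)h_{n-i}(\mathbf w)$ ($e_0=1$, $e_n=0$ for $n<0$). With $\mathbf y=(y_i)_{i\in\mathbb Z},\mathbf z=(z_i)_{i\in\mathbb Z}$: $\mathsf S^{\mathbf a,\mathbf b}_{\lambda/\mu}(\mathbf y/\mathbf z)=\det[e_{\lambda'_i-i-\mu'_j+j}(\mathbf y_{a_j,b_i}/\mathbf z_{a'_j,b'_i})]_{1\le i,j\le n}$. The $g$-specialization (for given $m$) substitutes $y_i\mapsto x_i$ ($i\in[m]$), $y_i\mapsto\beta_{i-m}$ ($i>m$), $y_i\mapsto-\alpha_{-i+1}$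 ($i\le0$), and $z_i\mapsto0$ ($i\in[m]$), $z_i\mapsto-\alpha_{i-m}$ ($i>m$), $z_i\mapsto\beta_{-i+1}$ ($i\le0$). The flagged dual Grothendieck enumerator is $\mathsf g^{\mathbf a,\mathbf b}_{\lambda/\mu}(\mathbf x_m;\boldsymbol\alpha,\boldsymbol\beta)=\mathsf S^{\mathbf a,\mathbf b}_{\lambda/\mu}(\mathbf y/\mathbf z)|_g$. The dual refined canonical stable Grothendieck polynomial is $g_{\lambda/\mu}(\mathbf x;\boldsymbol\alpha,\boldsymbol\beta)=\det[e_{\lambda'_i-i-\mu'_j+j}(\mathbf x,\overline{\boldsymbol\alpha}_{j-1},\boldsymbol\beta_{\lambda'_i-1}/\overline{\boldsymbol\alpha}_{i-1},\boldsymbol\beta_{\mu'_j})]_{1\le i,j\le n}$, $n\ge\lambda_1$; $g_{\lambda/\mu}(\mathbf x_m;\ldots)$ is this with $\mathbf x=(x_1,\ldots,x_m)$. *)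

theory Defs
  imports "HOL-Library.FuncSet" "Jordan_Normal_Form.Determinant"
begin

definition is_partition :: "nat list \<Rightarrow> bool" where
  "is_partition lam \<longleftrightarrow> sorted_wrt (\<ge>) lam \<and> (\<forall>p\<in>set lam. 0 < p)"

definition part :: "nat list \<Rightarrow> nat \<Rightarrow> nat" where
  "part lam i = (if 1 \<le> i \<and> i \<le> length lam then lam ! (i - 1) else 0)"

definition conjp :: "nat list \<Rightarrow> nat \<Rightarrow> nat" where
  "conjp lam j = length (filter (\<lambda>p. j \<le> p) lam)"

definition skew_shape :: "nat list \<Rightarrow> nat list \<Rightarrow> bool" where
  "skew_shape lam mu \<longleftrightarrow> is_partition lam \<and> is_partition mu \<and> (\<forall>i\<ge>1. part mu i \<le> part lam i)"

text \<open>Contents are c(i,j) = j - i + d with an offset d: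
  d = r - 1 + lam'_1 for the r-shape (lam/mu, r), and d = 0 for a usual skew shape.\<close>
definition roffset :: "nat list \<Rightarrow> int \<Rightarrow> int" where
  "roffset lam r = r - 1 + int (conjp lam 1)"

definition content :: "int \<Rightarrow> nat \<Rightarrow> nat \<Rightarrow> int" where
  "content d i j = int j - int i + d"

text \<open>Top cell of column i is (mu'_i + 1, i), bottom cell is (lam'_i, i).\<close>
definition ctop :: "nat list \<Rightarrow> int \<Rightarrow> nat \<Rightarrow> int" where
  "ctop mu d i = content d (conjp mu i + 1) i"

definition cbot :: "nat list \<Rightarrow> int \<Rightarrow> nat \<Rightarrow> int" where
  "cbot lam d i = content d (conjp lam i) i"

definition column_flags :: "nat \<Rightarrow> nat list \<Rightarrow> nat list \<Rightarrow> (nat \<Rightarrow> int) \<Rightarrow> (nat \<Rightarrow> int) \<Rightarrow> bool" where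
  "column_flags n lam mu a b \<longleftrightarrow> part lam 1 \<le> n \<and>
     (\<forall>i. 1 \<le> i \<and> i < n \<and> conjp mu i < conjp lam (i + 1) \<longrightarrow>
        a i - a (i + 1) \<le> int (conjp mu i) - int (conjp mu (i + 1)) + 1 \<and>
        b i - b (i + 1) \<le> int (conjp lam i) - int (conjp lam (i + 1)) + 1)"

definition aconj :: "nat list \<Rightarrow> int \<Rightarrow> (nat \<Rightarrow> int) \<Rightarrow> nat \<Rightarrow> int" where
  "aconj mu d a i = a i + ctop mu d i"

definition bconj :: "nat list \<Rightarrow> int \<Rightarrow> (nat \<Rightarrow> int) \<Rightarrow> nat \<Rightarrow> int" where
  "bconj lam d b i = b i + cbot lam d i"

definition esym :: "'a::comm_ring_1 list \<Rightarrow> nat \<Rightarrow> 'a" where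
  "esym xs k = (\<Sum>S \<in> {S. S \<subseteq> {0..<length xs} \<and> card S = k}. \<Prod>i\<in>S. xs ! i)"

definition hsym :: "'a::comm_ring_1 list \<Rightarrow> nat \<Rightarrow> 'a" where
  "hsym xs k = (\<Sum>f \<in> {f \<in> {0..<length xs} \<rightarrow>\<^sub>E {..k}. (\<Sum>i<length xs. f i) = k}.
                   \<Prod>i<length xs. (xs ! i) ^ (f i))"

definition esup :: "'a::comm_ring_1 list \<Rightarrow> 'a list \<Rightarrow> int \<Rightarrow> 'a" where
  "esup X W n = (if n < 0 then 0 else
     (\<Sum>i=0..nat n. (-1) ^ (nat n - i) * esym X i * hsym W (nat n - i)))"

definition varseq :: "(int \<Rightarrow> 'a) \<Rightarrow> int \<Rightarrow> int \<Rightarrow> 'a list" where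
  "varseq w p q = map w [p..q]"

definition bar :: "'a::comm_ring_1 list \<Rightarrow> 'a list" where
  "bar xs = map uminus xs"

text \<open>Sequences indexed from 1, extended by 0 at indices \<le> 0.\<close>
definition ext0 :: "(nat \<Rightarrow> 'a::comm_ring_1) \<Rightarrow> int \<Rightarrow> 'a" where
  "ext0 f k = (if k \<le> 0 then 0 else f (nat k))"

definition jtdet :: "nat \<Rightarrow> (nat \<Rightarrow> nat \<Rightarrow> 'a::comm_ring_1) \<Rightarrow> 'a" where
  "jtdet n M = det (mat n n (\<lambda>(i, j). M (i + 1) (j + 1)))"

definition Sflag :: "nat \<Rightarrow> nat list \<Rightarrow> nat list \<Rightarrow> int \<Rightarrow> (nat \<Rightarrow> int) \<Rightarrow> (nat \<Rightarrow> int)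
    \<Rightarrow> (int \<Rightarrow> 'a::comm_ring_1) \<Rightarrow> (int \<Rightarrow> 'a) \<Rightarrow> 'a" where
  "Sflag n lam mu d a b y z = jtdet n (\<lambda>i j.
      esup (varseq y (a j) (b i)) (varseq z (aconj mu d a j) (bconj lam d b i))
           (int (conjp lam i) - int i - int (conjp mu j) + int j))"

definition gy :: "nat \<Rightarrow> (nat \<Rightarrow> 'a::comm_ring_1) \<Rightarrow> (nat \<Rightarrow> 'a) \<Rightarrow> (nat \<Rightarrow> 'a) \<Rightarrow> int \<Rightarrow> 'a" where
  "gy m x \<alpha> \<beta> i = (if 1 \<le> i \<and> i \<le> int m then x (nat i)
                   else if i > int m then \<beta> (nat (i - int m)) else - \<alpha> (nat (1 - i)))"

definition gz :: "nat \<Rightarrow> (nat \<Rightarrow> 'a::comm_ring_1) \<Rightarrow> (nat \<Rightarrow> 'a) \<Rightarrow> int \<Rightarrow> 'a" where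
  "gz m \<alpha> \<beta> i = (if 1 \<le> i \<and> i \<le> int m then 0
                 else if i > int m then - \<alpha> (nat (i - int m)) else \<beta> (nat (1 - i)))"

definition gflag :: "nat \<Rightarrow> nat \<Rightarrow> nat list \<Rightarrow> nat list \<Rightarrow> int \<Rightarrow> (nat \<Rightarrow> int) \<Rightarrow> (nat \<Rightarrow> int)
    \<Rightarrow> (nat \<Rightarrow> 'a::comm_ring_1) \<Rightarrow> (nat \<Rightarrow> 'a) \<Rightarrow> (nat \<Rightarrow> 'a) \<Rightarrow> 'a" where
  "gflag m n lam mu d a b x \<alpha> \<beta> = Sflag n lam mu d a b (gy m x \<alpha> \<beta>) (gz m \<alpha> \<beta>)"

definition gdual :: "nat \<Rightarrow> nat \<Rightarrow> nat list \<Rightarrow> nat list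
    \<Rightarrow> (nat \<Rightarrow> 'a::comm_ring_1) \<Rightarrow> (nat \<Rightarrow> 'a) \<Rightarrow> (nat \<Rightarrow> 'a) \<Rightarrow> 'a" where
  "gdual m n lam mu x \<alpha> \<beta> = jtdet n (\<lambda>i j.
      esup (varseq (\<lambda>k. x (nat k)) 1 (int m) @ bar (varseq (ext0 \<alpha>) 1 (int j - 1))
              @ varseq (ext0 \<beta>) 1 (int (conjp lam i) - 1))
           (bar (varseq (ext0 \<alpha>) 1 (int i - 1)) @ varseq (ext0 \<beta>) 1 (int (conjp mu j)))
           (int (conjp lam i) - int i - int (conjp mu j) + int j))"

definition tau :: "int \<Rightarrow> int" where "tau k = - k + 1"
definition eta :: "nat \<Rightarrow> int \<Rightarrow> int" where "eta m k = k - int m"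

end

theory Submission
  imports Defs "HOL-Computational_Algebra.Polynomial"
begin

definition EP :: "'a::comm_ring_1 list \<Rightarrow> 'a poly" where
  "EP xs = prod_list (map (\<lambda>v. [:1, v:]) xs)"

definition HP :: "nat \<Rightarrow> 'a::comm_ring_1 list \<Rightarrow> 'a poly" where
  "HP k xs = prod_list (map (\<lambda>v. \<Sum>j\<le>k. monom (v ^ j) j) xs)"

lemma prod_monom: "finite A \<Longrightarrow> (\<Prod>i\<in>A. monom (f i) (g i)) = monom (\<Prod>i\<in>A. f i) (\<Sum>i\<in>A. g i)"
  by (induction A rule: finite_induct) (auto simp: mult_monom)

lemma prod_list_map_nth: "prod_list (map f xs) = (\<Prod>i\<in>{0..<length xs}. f (xs ! i))"
  by (subst prod.list_conv_set_nth) simp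

lemma esym_EP: "esym xs k = coeff (EP xs) k"
proof -
  let ?A = "{0..<length xs}"
  have "EP xs = (\<Prod>i\<in>?A. monom (xs ! i) 1 + 1)"
    unfolding EP_def prod_list_map_nth
    by (intro prod.cong refl) (simp add: monom_Suc monom_0 one_pCons)
  also have "\<dots> = (\<Sum>B\<in>Pow ?A. (\<Prod>i\<in>B. monom (xs ! i) 1) * (\<Prod>i\<in>?A - B. 1))"
    by (rule prod_add) simp
  also have "\<dots> = (\<Sum>B\<in>Pow ?A. monom (\<Prod>i\<in>B. xs ! i) (card B))"
    by (intro sum.cong refl) (auto simp: prod_monom finite_subset)
  finally have "coeff (EP xs) k = (\<Sum>B\<in>Pow ?A. if card B = k then (\<Prod>i\<in>B. xs ! i) else 0)"
    by (simp add: coeff_sum)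
  also have "\<dots> = (\<Sum>B\<in>{B\<in>Pow ?A. card B = k}. (\<Prod>i\<in>B. xs ! i))"
    by (rule sum.inter_filter[symmetric]) simp
  also have "{B\<in>Pow ?A. card B = k} = {S. S \<subseteq> ?A \<and> card S = k}" by auto
  finally show ?thesis unfolding esym_def by simp
qed

lemma hsym_HP: "hsym xs k = coeff (HP k xs) k"
proof -
  let ?A = "{0..<length xs}"
  have "HP k xs = (\<Prod>i\<in>?A. \<Sum>j\<in>{..k}. monom ((xs ! i) ^ j) j)"
    unfolding HP_def prod_list_map_nth by simp
  also have "\<dots> = (\<Sum>g\<in>PiE ?A (\<lambda>_. {..k}). \<Prod>i\<in>?A. monom ((xs ! i) ^ g i) (g i))"
    by (rule prod_sum_PiE) auto
  also have "\<dots> = (\<Sum>g\<in>PiE ?A (\<lambda>_. {..k}). monom (\<Prod>i\<in>?A. (xs ! i) ^ g i) (\<Sum>i\<in>?A. g i))"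
    by (intro sum.cong refl) (simp add: prod_monom)
  finally have "coeff (HP k xs) k = (\<Sum>g\<in>PiE ?A (\<lambda>_. {..k}). if (\<Sum>i\<in>?A. g i) = k then (\<Prod>i\<in>?A. (xs ! i) ^ g i) else 0)"
    by (simp add: coeff_sum)
  also have "\<dots> = (\<Sum>g\<in>{g\<in>PiE ?A (\<lambda>_. {..k}). (\<Sum>i\<in>?A. g i) = k}. (\<Prod>i\<in>?A. (xs ! i) ^ g i))"
    by (rule sum.inter_filter[symmetric]) (simp add: finite_PiE)
  finally have X: "coeff (HP k xs) k = (\<Sum>g\<in>{g\<in>PiE ?A (\<lambda>_. {..k}). (\<Sum>i\<in>?A. g i) = k}. (\<Prod>i\<in>?A. (xs ! i) ^ g i))" .
  show ?thesis unfolding hsym_def X by (simp only: atLeast0LessThan)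
qed


lemma esup_cong:
  assumes "EP X = EP X'" "\<And>k. HP k W = HP k W'"
  shows "esup X W n = esup X' W' n"
  unfolding esup_def esym_EP hsym_HP assms by simp

lemma esup_neg: "n < 0 \<Longrightarrow> esup X W n = 0"
  by (simp add: esup_def)

lemma coeff_EP_0: "coeff (EP X) 0 = 1"
  by (induction X) (auto simp: EP_def coeff_mult_0)

lemma HP_0: "HP 0 W = 1"
  by (induction W) (auto simp: HP_def)

lemma esup_0: "esup X W 0 = 1"
  by (simp add: esup_def esym_EP hsym_HP coeff_EP_0 HP_0)

lemma EP_append: "EP (xs @ ys) = EP xs * EP ys"
  by (simp add: EP_def)

lemma HP_append: "HP k (xs @ ys) = HP k xs * HP k ys"
  by (simp add: HP_def)

lemma EP_bar: "EP (bar xs) = prod_list (map (\<lambda>v. [:1, - v:]) xs)"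
  by (simp add: EP_def bar_def comp_def)

lemma HP_bar: "HP k (bar xs) = prod_list (map (\<lambda>v. \<Sum>j\<le>k. monom ((- v) ^ j) j) xs)"
  by (simp add: HP_def bar_def comp_def)

lemma prod_varseq: "prod_list (map F (varseq w p q)) = (\<Prod>k\<in>{p..q}. F (w k))"
proof -
  have "prod_list (map (\<lambda>k. F (w k)) [p..q]) = (\<Prod>k\<in>set [p..q]. F (w k))"
    by (rule prod.distinct_set_conv_list[symmetric]) simp
  then show ?thesis by (simp add: varseq_def comp_def)
qed

lemma HT0: "(\<Sum>i\<le>k. monom ((0::'a::comm_ring_1) ^ i) i) = 1"
  by (induction k) (auto simp: one_pCons monom_0)

lemma EP_varseq: "EP (varseq w p q) = (\<Prod>k\<in>{p..q}. [:1, w k:])"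
  unfolding EP_def by (rule prod_varseq)

lemma HP_varseq: "HP j (varseq w p q) = (\<Prod>k\<in>{p..q}. \<Sum>i\<le>j. monom ((w k) ^ i) i)"
  unfolding HP_def by (rule prod_varseq)

lemma EP_bar_varseq: "EP (bar (varseq w p q)) = (\<Prod>k\<in>{p..q}. [:1, - w k:])"
  unfolding EP_bar by (rule prod_varseq)

lemma HP_bar_varseq: "HP j (bar (varseq w p q)) = (\<Prod>k\<in>{p..q}. \<Sum>i\<le>j. monom ((- w k) ^ i) i)"
  unfolding HP_bar by (rule prod_varseq)

lemma prod_ext_lower:
  fixes g :: "int \<Rightarrow> 'b::comm_monoid_mult"
  assumes "\<And>k. k \<le> 0 \<Longrightarrow> g k = 1"
  shows "(\<Prod>k\<in>{max 1 L..U}. g k) = (\<Prod>k\<in>{L..U}. g k)"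
  by (rule prod.mono_neutral_left) (auto simp: assms)

lemma prod_reflect_int:
  fixes g :: "int \<Rightarrow> 'b::comm_monoid_mult"
  shows "(\<Prod>k\<in>{L..U}. g k) = (\<Prod>k\<in>{c - U..c - L}. g (c - k))"
  by (rule prod.reindex_bij_witness[where i="\<lambda>k. c - k" and j="\<lambda>k. c - k"]) auto

lemma prod_shift_int:
  fixes g :: "int \<Rightarrow> 'b::comm_monoid_mult"
  shows "(\<Prod>k\<in>{L..U}. g k) = (\<Prod>k\<in>{L - c..U - c}. g (k + c))"
  by (rule prod.reindex_bij_witness[where i="\<lambda>k. k + c" and j="\<lambda>k. k - c"]) auto

lemma gy_split:
  fixes F :: "'a::comm_ring_1 \<Rightarrow> 'b::comm_monoid_mult"
  assumes F0: "F 0 = 1"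
  shows "(\<Prod>k\<in>{A..B}. F (gy m x \<alpha> \<beta> k)) =
    (\<Prod>k\<in>{max 1 A..min (int m) B}. F (x (nat k))) * (\<Prod>k\<in>{1 - B..1 - A}. F (- ext0 \<alpha> k))
    * (\<Prod>k\<in>{A - int m..B - int m}. F (ext0 \<beta> k))"
proof -
  let ?g = "\<lambda>k. F (gy m x \<alpha> \<beta> k)"
  have split: "{A..B} = {A..min 0 B} \<union> ({max 1 A..min (int m) B} \<union> {max A (int m + 1)..B})"
    by auto
  have "(\<Prod>k\<in>{A..B}. ?g k) = (\<Prod>k\<in>{A..min 0 B}. ?g k) * ((\<Prod>k\<in>{max 1 A..min (int m) B}. ?g k)
        * (\<Prod>k\<in>{max A (int m + 1)..B}. ?g k))"
    unfolding split by (subst prod.union_disjoint, auto)+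
  also have "(\<Prod>k\<in>{max 1 A..min (int m) B}. ?g k) = (\<Prod>k\<in>{max 1 A..min (int m) B}. F (x (nat k)))"
    by (intro prod.cong refl) (auto simp: gy_def)
  also have "(\<Prod>k\<in>{A..min 0 B}. ?g k) = (\<Prod>k\<in>{1 - min 0 B..1 - A}. ?g (1 - k))"
    by (rule prod_reflect_int)
  also have "\<dots> = (\<Prod>k\<in>{max 1 (1 - B)..1 - A}. F (- ext0 \<alpha> k))"
    by (intro prod.cong) (auto simp: gy_def ext0_def)
  also have "\<dots> = (\<Prod>k\<in>{1 - B..1 - A}. F (- ext0 \<alpha> k))"
    by (rule prod_ext_lower) (simp add: ext0_def F0)
  also have "(\<Prod>k\<in>{max A (int m + 1)..B}. ?g k) = (\<Prod>k\<in>{max A (int m + 1) - int m..B - int m}. ?g (k + int m))"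
    by (rule prod_shift_int)
  also have "\<dots> = (\<Prod>k\<in>{max 1 (A - int m)..B - int m}. F (ext0 \<beta> k))"
    by (intro prod.cong) (auto simp: gy_def ext0_def)
  also have "\<dots> = (\<Prod>k\<in>{A - int m..B - int m}. F (ext0 \<beta> k))"
    by (rule prod_ext_lower) (simp add: ext0_def F0)
  finally show ?thesis by (simp add: ac_simps)
qed

lemma gz_gy: "gz m \<alpha> \<beta> = gy m (\<lambda>_. 0) (\<lambda>k. - \<beta> k) (\<lambda>k. - \<alpha> k)"
  by (auto simp: fun_eq_iff gz_def gy_def)

lemma ext0_neg: "ext0 (\<lambda>k. - f k) = (\<lambda>k. - ext0 f k)"
  by (auto simp: fun_eq_iff ext0_def)

lemma gz_split:
  fixes F :: "'a::comm_ring_1 \<Rightarrow> 'b::comm_monoid_mult"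
  assumes F0: "F 0 = 1"
  shows "(\<Prod>k\<in>{A..B}. F (gz m \<alpha> \<beta> k)) =
    (\<Prod>k\<in>{A - int m..B - int m}. F (- ext0 \<alpha> k)) * (\<Prod>k\<in>{1 - B..1 - A}. F (ext0 \<beta> k))"
  unfolding gz_gy gy_split[of F, OF F0] ext0_neg by (simp add: F0 ac_simps)

lemma entry:
  "esup (varseq (gy m x \<alpha> \<beta>) A B) (varseq (gz m \<alpha> \<beta>) A' B') N =
   esup (varseq (\<lambda>k. x (nat k)) (max 1 A) (min (int m) B)
                   @ bar (varseq (ext0 \<alpha>) (tau B) (tau A))
                   @ varseq (ext0 \<beta>) (eta m A) (eta m B))
        (bar (varseq (ext0 \<alpha>) (eta m A') (eta m B'))
                   @ varseq (ext0 \<beta>) (tau B') (tau A')) N"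
proof (rule esup_cong)
  show "EP (varseq (gy m x \<alpha> \<beta>) A B) = EP (varseq (\<lambda>k. x (nat k)) (max 1 A) (min (int m) B)
                   @ bar (varseq (ext0 \<alpha>) (tau B) (tau A))
                   @ varseq (ext0 \<beta>) (eta m A) (eta m B))"
    unfolding EP_append EP_varseq EP_bar_varseq
    by (subst gy_split[where F="\<lambda>v. [:1, v:]"]) (simp_all add: tau_def eta_def ac_simps)
  fix k
  show "HP k (varseq (gz m \<alpha> \<beta>) A' B') = HP k (bar (varseq (ext0 \<alpha>) (eta m A') (eta m B'))
                   @ varseq (ext0 \<beta>) (tau B') (tau A'))"
    unfolding HP_append HP_varseq HP_bar_varseq
    by (subst gz_split[where F="\<lambda>v. \<Sum>i\<le>k. monom (v ^ i) i"]) (simp_all add: tau_def eta_def ac_simps HT0)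
qed


lemma perm_fix:
  fixes n q i :: nat
  assumes p: "p permutes {0..<n}" and ge: "\<forall>i\<in>{q..<n}. i \<le> p i"
  shows "i \<in> {q..<n} \<Longrightarrow> p i = i"
proof (induction "n - i" arbitrary: i rule: less_induct)
  case less
  show ?case
  proof (rule ccontr)
    assume ne: "p i \<noteq> i"
    with ge less.prems have gt: "i < p i" by force
    have lt: "p i < n" using permutes_in_image[OF p] less.prems by auto
    have pin: "p i \<in> {q..<n}" using gt lt less.prems by auto
    have "n - p i < n - i" using gt lt by linarith
    then have "p (p i) = p i" by (rule less.hyps[OF _ pin])
    then show False using permutes_inj[OF p] ne by (metis injD)
  qed
qed

lemma jtdet_eq:
  assumes top: "\<And>i j. 1 \<le> i \<Longrightarrow> i \<le> q \<Longrightarrow> 1 \<le> j \<Longrightarrow> j \<le> n \<Longrightarrow> M i j = M' i j"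
    and low: "\<And>i j. q < i \<Longrightarrow> i \<le> n \<Longrightarrow> j < i \<Longrightarrow> M i j = 0 \<and> M' i j = 0"
    and diag: "\<And>i. q < i \<Longrightarrow> i \<le> n \<Longrightarrow> M i i = 1 \<and> M' i i = 1"
  shows "jtdet n M = jtdet n M'"
proof -
  have eq: "(\<Prod>i = 0..<n. M (Suc i) (Suc (p i))) = (\<Prod>i = 0..<n. M' (Suc i) (Suc (p i)))"
    if p: "p permutes {0..<n}" for p
  proof (cases "\<exists>i\<in>{q..<n}. p i < i")
    case True
    then obtain i where i: "i \<in> {q..<n}" "p i < i" by blast
    have qi: "q < Suc i" "Suc i \<le> n" "Suc (p i) < Suc i" using i by auto
    have z: "M (Suc i) (Suc (p i)) = 0" "M' (Suc i) (Suc (p i)) = 0" using low[OF qi] by auto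
    have i0: "i \<in> {0..<n}" using i by simp
    have "(\<Prod>i = 0..<n. M (Suc i) (Suc (p i))) = 0"
      by (rule prod_zero) (use i0 z(1) in blast)+
    moreover have "(\<Prod>i = 0..<n. M' (Suc i) (Suc (p i))) = 0"
      by (rule prod_zero) (use i0 z(2) in blast)+
    ultimately show ?thesis by simp
  next
    case False
    have fx: "p i = i" if "i \<in> {q..<n}" for i
      by (rule perm_fix[OF p _ that]) (use False in \<open>simp add: not_less\<close>)
    show ?thesis
    proof (rule prod.cong[OF refl])
      fix i assume i: "i \<in> {0..<n}"
      have pi: "p i \<in> {0..<n}" using i permutes_in_image[OF p, of i] by simp
      show "M (Suc i) (Suc (p i)) = M' (Suc i) (Suc (p i))"
      proof (cases "i < q")
        case True
        have "1 \<le> Suc i" "Suc i \<le> q" "1 \<le> Suc (p i)" "Suc (p i) \<le> n" using True pi by auto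
        then show ?thesis by (rule top)
      next
        case False
        then have pe: "p i = i" using fx i by simp
        have "q < Suc i" "Suc i \<le> n" using False i by auto
        then show ?thesis using diag pe by simp
      qed
    qed
  qed
  have idx: "(\<Prod>i = 0..<n. mat n n (\<lambda>(i, j). f (Suc i) (Suc j)) $$ (i, p i)) = (\<Prod>i = 0..<n. f (Suc i) (Suc (p i)))"
    if p: "p permutes {0..<n}" for p and f :: "nat \<Rightarrow> nat \<Rightarrow> 'a"
  proof (rule prod.cong[OF refl])
    fix i assume i: "i \<in> {0..<n}"
    have pi: "p i < n" using i permutes_in_image[OF p, of i] by simp
    show "mat n n (\<lambda>(i, j). f (Suc i) (Suc j)) $$ (i, p i) = f (Suc i) (Suc (p i))"
      using i pi by simp
  qed
  have "det (mat n n (\<lambda>(i, j). M (Suc i) (Suc j))) = det (mat n n (\<lambda>(i, j). M' (Suc i) (Suc j)))"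
    unfolding det_def dim_row_mat dim_col_mat if_True
    by (simp only: simp_thms if_True) (rule sum.cong[OF refl], simp only: mem_Collect_eq idx eq)
  then show ?thesis unfolding jtdet_def by simp
qed

lemma part_max: "is_partition lam \<Longrightarrow> p \<in> set lam \<Longrightarrow> p \<le> part lam 1"
  by (cases lam) (auto simp: is_partition_def part_def)

lemma conjp_zero: "is_partition lam \<Longrightarrow> part lam 1 < r \<Longrightarrow> conjp lam r = 0"
  unfolding conjp_def using part_max by (fastforce simp: filter_empty_conv)

lemma conjp_pos: "1 \<le> r \<Longrightarrow> r \<le> part lam 1 \<Longrightarrow> 1 \<le> conjp lam r"
  by (cases lam) (auto simp: part_def conjp_def)

lemma prod_ext_lower':
  fixes g :: "int \<Rightarrow> 'b::comm_monoid_mult"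
  assumes "\<And>k. k \<le> 0 \<Longrightarrow> g k = 1" "L \<le> 1"
  shows "(\<Prod>k\<in>{L..U}. g k) = (\<Prod>k\<in>{1..U}. g k)"
proof -
  have "max 1 L = 1" using assms(2) by simp
  then show ?thesis using prod_ext_lower[of g L U, OF assms(1)] by simp
qed

lemma top_entry:
  assumes "1 \<le> L" "1 \<le> j" "1 \<le> i" "A = 2 - int j" "B = int L + int m - 1" "A' = 1 - int Mu"
    "B' = int i + int m - 1"
  shows "esup (varseq xf (max 1 A) (min (int m) B) @ bar (varseq (ext0 \<alpha>) (tau B) (tau A))
               @ varseq (ext0 \<beta>) (eta m A) (eta m B))
              (bar (varseq (ext0 \<alpha>) (eta m A') (eta m B')) @ varseq (ext0 \<beta>) (tau B') (tau A')) N
       = esup (varseq xf 1 (int m) @ bar (varseq (ext0 \<alpha>) 1 (int j - 1)) @ varseq (ext0 \<beta>) 1 (int L - 1))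
              (bar (varseq (ext0 \<alpha>) 1 (int i - 1)) @ varseq (ext0 \<beta>) 1 (int Mu)) N"
proof (rule esup_cong)
  have m1: "max 1 A = 1" "min (int m) B = int m" using assms by auto
  have t: "tau B = 2 - int L - int m" "tau A = int j - 1" "eta m A = 2 - int j - int m" "eta m B = int L - 1"
    "eta m A' = 1 - int Mu - int m" "eta m B' = int i - 1" "tau B' = 2 - int i - int m" "tau A' = int Mu"
    using assms by (auto simp: tau_def eta_def)
  show "EP (varseq xf (max 1 A) (min (int m) B) @ bar (varseq (ext0 \<alpha>) (tau B) (tau A))
               @ varseq (ext0 \<beta>) (eta m A) (eta m B)) =
        EP (varseq xf 1 (int m) @ bar (varseq (ext0 \<alpha>) 1 (int j - 1)) @ varseq (ext0 \<beta>) 1 (int L - 1))"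
    unfolding EP_append EP_varseq EP_bar_varseq m1 t
    by (subst (1 2) prod_ext_lower') (use assms in \<open>auto simp: ext0_def one_pCons\<close>)
  fix k
  show "HP k (bar (varseq (ext0 \<alpha>) (eta m A') (eta m B')) @ varseq (ext0 \<beta>) (tau B') (tau A')) =
        HP k (bar (varseq (ext0 \<alpha>) 1 (int i - 1)) @ varseq (ext0 \<beta>) 1 (int Mu))"
    unfolding HP_append HP_varseq HP_bar_varseq t
    by (subst (1 2) prod_ext_lower') (use assms in \<open>auto simp: ext0_def HT0\<close>)
qed

theorem proposition3p5:
  fixes m n :: nat and lam mu :: "nat list"
    and x \<alpha> \<beta> :: "nat \<Rightarrow> 'a::comm_ring_1"
  assumes shape: "skew_shape lam mu"
    and n_ge: "part lam 1 \<le> n"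
  shows "(\<forall>(r::int) (a::nat \<Rightarrow> int) (b::nat \<Rightarrow> int).
           column_flags n lam mu a b \<longrightarrow>
           gflag m n lam mu (roffset lam r) a b x \<alpha> \<beta> =
           jtdet n (\<lambda>i j.
             esup (varseq (\<lambda>k. x (nat k)) (max 1 (a j)) (min (int m) (b i))
                   @ bar (varseq (ext0 \<alpha>) (tau (b i)) (tau (a j)))
                   @ varseq (ext0 \<beta>) (eta m (a j)) (eta m (b i)))
                  (bar (varseq (ext0 \<alpha>) (eta m (aconj mu (roffset lam r) a j))
                                          (eta m (bconj lam (roffset lam r) b i)))
                   @ varseq (ext0 \<beta>) (tau (bconj lam (roffset lam r) b i))
                                      (tau (aconj mu (roffset lam r) a j)))
                  (int (conjp lam i) - int i - int (conjp mu j) + int j)))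
       \<and> (\<forall>(a::nat \<Rightarrow> int) (b::nat \<Rightarrow> int).
           (\<forall>i\<in>{1..n}. a i = - int i + 2 \<and> b i = int (conjp lam i) + int m - 1) \<longrightarrow>
           Sflag n lam mu 0 a b (gy m x \<alpha> \<beta>) (gz m \<alpha> \<beta>) = gflag m n lam mu 0 a b x \<alpha> \<beta>
           \<and> gflag m n lam mu 0 a b x \<alpha> \<beta> = gdual m n lam mu x \<alpha> \<beta>)"
proof -
  have plam: "is_partition lam" and pmu: "is_partition mu" and mul: "part mu 1 \<le> part lam 1"
    using shape unfolding skew_shape_def by auto
  have P1: "\<forall>(r::int) (a::nat \<Rightarrow> int) (b::nat \<Rightarrow> int).
           column_flags n lam mu a b \<longrightarrow>
           gflag m n lam mu (roffset lam r) a b x \<alpha> \<beta> =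
           jtdet n (\<lambda>i j.
             esup (varseq (\<lambda>k. x (nat k)) (max 1 (a j)) (min (int m) (b i))
                   @ bar (varseq (ext0 \<alpha>) (tau (b i)) (tau (a j)))
                   @ varseq (ext0 \<beta>) (eta m (a j)) (eta m (b i)))
                  (bar (varseq (ext0 \<alpha>) (eta m (aconj mu (roffset lam r) a j))
                                          (eta m (bconj lam (roffset lam r) b i)))
                   @ varseq (ext0 \<beta>) (tau (bconj lam (roffset lam r) b i))
                                      (tau (aconj mu (roffset lam r) a j)))
                  (int (conjp lam i) - int i - int (conjp mu j) + int j))"
    by (simp add: gflag_def Sflag_def entry)
  have P2: "\<forall>(a::nat \<Rightarrow> int) (b::nat \<Rightarrow> int).
           (\<forall>i\<in>{1..n}. a i = - int i + 2 \<and> b i = int (conjp lam i) + int m - 1) \<longrightarrow>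
           Sflag n lam mu 0 a b (gy m x \<alpha> \<beta>) (gz m \<alpha> \<beta>) = gflag m n lam mu 0 a b x \<alpha> \<beta>
           \<and> gflag m n lam mu 0 a b x \<alpha> \<beta> = gdual m n lam mu x \<alpha> \<beta>"
  proof (intro allI impI conjI)
    fix a b :: "nat \<Rightarrow> int"
    assume H: "\<forall>i\<in>{1..n}. a i = - int i + 2 \<and> b i = int (conjp lam i) + int m - 1"
    show "Sflag n lam mu 0 a b (gy m x \<alpha> \<beta>) (gz m \<alpha> \<beta>) = gflag m n lam mu 0 a b x \<alpha> \<beta>"
      by (simp add: gflag_def)
    show "gflag m n lam mu 0 a b x \<alpha> \<beta> = gdual m n lam mu x \<alpha> \<beta>"
      unfolding gflag_def Sflag_def gdual_def entry
    proof (rule jtdet_eq[where q="part lam 1"])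
      fix i j :: nat
      assume ij: "1 \<le> i" "i \<le> part lam 1" "1 \<le> j" "j \<le> n"
      have iN: "i \<le> n" using ij n_ge by simp
      have L: "1 \<le> conjp lam i" by (rule conjp_pos) (use ij in auto)
      have Hi: "b i = int (conjp lam i) + int m - 1" using H ij iN by auto
      have Hj: "a j = 2 - int j" using H ij by auto
      show "esup (varseq (\<lambda>k. x (nat k)) (max 1 (a j)) (min (int m) (b i)) @
             bar (varseq (ext0 \<alpha>) (tau (b i)) (tau (a j))) @ varseq (ext0 \<beta>) (eta m (a j)) (eta m (b i)))
            (bar (varseq (ext0 \<alpha>) (eta m (aconj mu 0 a j)) (eta m (bconj lam 0 b i))) @
             varseq (ext0 \<beta>) (tau (bconj lam 0 b i)) (tau (aconj mu 0 a j)))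
            (int (conjp lam i) - int i - int (conjp mu j) + int j) =
           esup (varseq (\<lambda>k. x (nat k)) 1 (int m) @ bar (varseq (ext0 \<alpha>) 1 (int j - 1)) @
             varseq (ext0 \<beta>) 1 (int (conjp lam i) - 1))
            (bar (varseq (ext0 \<alpha>) 1 (int i - 1)) @ varseq (ext0 \<beta>) 1 (int (conjp mu j)))
            (int (conjp lam i) - int i - int (conjp mu j) + int j)"
        by (rule top_entry) (use L ij Hi Hj in \<open>auto simp: aconj_def bconj_def ctop_def cbot_def content_def\<close>)
    next
      fix i j :: nat
      assume ij: "part lam 1 < i" "i \<le> n" "j < i"
      have "conjp lam i = 0" by (rule conjp_zero[OF plam ij(1)])
      then show "esup (varseq (\<lambda>k. x (nat k)) (max 1 (a j)) (min (int m) (b i)) @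
             bar (varseq (ext0 \<alpha>) (tau (b i)) (tau (a j))) @ varseq (ext0 \<beta>) (eta m (a j)) (eta m (b i)))
            (bar (varseq (ext0 \<alpha>) (eta m (aconj mu 0 a j)) (eta m (bconj lam 0 b i))) @
             varseq (ext0 \<beta>) (tau (bconj lam 0 b i)) (tau (aconj mu 0 a j)))
            (int (conjp lam i) - int i - int (conjp mu j) + int j) = 0 \<and>
           esup (varseq (\<lambda>k. x (nat k)) 1 (int m) @ bar (varseq (ext0 \<alpha>) 1 (int j - 1)) @
             varseq (ext0 \<beta>) 1 (int (conjp lam i) - 1))
            (bar (varseq (ext0 \<alpha>) 1 (int i - 1)) @ varseq (ext0 \<beta>) 1 (int (conjp mu j)))
            (int (conjp lam i) - int i - int (conjp mu j) + int j) = 0"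
        using ij by (simp add: esup_neg)
    next
      fix i :: nat
      assume ij: "part lam 1 < i" "i \<le> n"
      have "conjp lam i = 0" by (rule conjp_zero[OF plam ij(1)])
      moreover have "conjp mu i = 0" by (rule conjp_zero[OF pmu]) (use ij mul in simp)
      ultimately show "esup (varseq (\<lambda>k. x (nat k)) (max 1 (a i)) (min (int m) (b i)) @
             bar (varseq (ext0 \<alpha>) (tau (b i)) (tau (a i))) @ varseq (ext0 \<beta>) (eta m (a i)) (eta m (b i)))
            (bar (varseq (ext0 \<alpha>) (eta m (aconj mu 0 a i)) (eta m (bconj lam 0 b i))) @
             varseq (ext0 \<beta>) (tau (bconj lam 0 b i)) (tau (aconj mu 0 a i)))
            (int (conjp lam i) - int i - int (conjp mu i) + int i) = 1 \<and>
           esup (varseq (\<lambda>k. x (nat k)) 1 (int m) @ bar (varseq (ext0 \<alpha>) 1 (int i - 1)) @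
             varseq (ext0 \<beta>) 1 (int (conjp lam i) - 1))
            (bar (varseq (ext0 \<alpha>) 1 (int i - 1)) @ varseq (ext0 \<beta>) 1 (int (conjp mu i)))
            (int (conjp lam i) - int i - int (conjp mu i) + int i) = 1"
        by (simp add: esup_0)
    qed
  qed
  from P1 P2 show ?thesis by blast
qed

end
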